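(* Let $\mathcal{N}$ be a non-degenerate GFNN with $D$-dimensional output, let $\rho$ be a nonlinearity, and let $A,B$ be disjoint sets of nodes of $\mathcal{N}$ with a common parent set such that $\mathcal{N}$ admits a $(\rho;A,B,C)$-modification. Then there exists a set $B^*\subset B$ such that $\mathcal{N}$ admits a non-degenerate $(\rho;A\cup B^*,B\setminus B^*,C)$-modification $\mathcal{N}'$.
   Context: A nonlinearity is a continuous $\rho:\mathbb{R}\to\mathbb{R}$ not of the form $t\mapsto at+b$. GFNN with $D$-dim output: $\mathcal{N}=(V,E,V_{\mathrm{in}},V_{\mathrm{out}},\Omega,\Theta,\Lambda)$, $(V,E)$ finite loopless DAG, $V_{\mathrm{in}}$ the parentless nodes, $V_{\mathrm{out}}\subset V\setminus V_{\mathrm{in}}$, nonzero real weights $\omega_{\tilde vv}$ on edges $(v,\tilde v)$, real biases $\theta_v$ on non-input nodes, real output scalars $\lambda^{(r)},\lambda^{(r)}_w$. $\mathrm{anc}(S)$: nodes with a directed path (length $\ge0$) into $S$. Non-degenerate: $V\setminus V_{\mathrm{in}}\subset\mathrm{anc}(V_{\mathrm{out}})$ and each $w\in V_{\mathrm{out}}$ has some $\lambda^{(r)}_w\ne0$. Affine symmetry of $\rho$: $(\zeta,\{(\alpha_s,\beta_s,\gamma_s)\}_{s\in\mathcal{I}})$, $\mathcal{I}$ nonempty finite, $\sum_s\alpha_s\rho(\beta_st+\gamma_s)=\zeta$ $\forall t$, no proper $\mathcal{I}'$ with $\{\rho(\beta_s\cdot+\gamma_s)\}_{\mathcal{I}'}\cup\{\mathbf1\}$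 linearly dependent. Irreducible: there is no nonempty $U$ with common parent set $P_U$, nonzero $\kappa_v,\beta_u$ with $\omega_{uv}=\beta_u\kappa_v$, and $\zeta$, nonzero $\alpha_u$ with $(\zeta,\{(\alpha_u,\beta_u,\theta_u)\}_{u\in U})$ an affine symmetry. $(\rho;A,B,C)$-modification of an irreducible $\mathcal{N}$: $A,B\subset V\setminus V_{\mathrm{in}}$ disjoint, $A\ne\varnothing$, common parent set $P$, $W=\{w:\mathrm{par}(w)\cap A\ne\varnothing\}$, $C=\{u'_1,\dots,u'_n\}$ ($n\ge1$) new nodes; require (i) an affine symmetry $(\zeta,\{(\alpha_u,\beta_u,\theta_u)\}_{u\in A\cup B}\cup\{(\alpha'_p,\beta'_p,\gamma'_p)\}_{p=1}^n)$; (ii) nonzero $\kappa_v$ with $\omega_{uv}=\beta_u\kappa_v$ ($u\in A\cup B,v\in P$); (iii) $A\subset\mathrm{par}(w)$ for $w\in W$, nonzero $\nu_w$ with $\omega_{wu}=\nu_w\alpha_u$; (iv) $A\cap V_{\mathrm{out}}=\varnothing$, or $A\subset V_{\mathrm{out}}$ with reals $\mu_r$, $\lambda^{(r)}_u=\mu_r\alpha_u$. Then: delete $A$ and incident edges; add $C$ with edges $(v,u'_p)$ of weight $\beta'_p\kappa_v$, bias $\gamma'_p$, edges $(u'_p,w)$ of weight $-\alpha'_p\nu_w$; $\theta_w\mapsto\theta_w+\zeta\nu_w$; for $w\in W,u\in B$: add edge with weight $-\alpha_u\nu_w$ if absent, else $\omega_{wu}\mapsto\omega_{wu}-\alpha_u\nu_w$,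 deleting the edge if $0$. If $A\subset V_{\mathrm{out}}$: $\lambda^{(r)}\mapsto\lambda^{(r)}+\zeta\mu_r$, $\lambda^{(r)}_{u'_p}=-\alpha'_p\mu_r$, for $u\in B$ $\lambda^{(r)}_u$ ($0$ if $u\notin V_{\mathrm{out}}$) $\mapsto\lambda^{(r)}_u-\alpha_u\mu_r$, new output set $(V_{\mathrm{out}}\setminus(A\cup B))\cup C\cup\{u\in B:\text{some new }\lambda^{(r)}_u\ne0\}$; else outputs unchanged. $\mathcal{N}$ admits a $(\rho;A,B,C)$-modification if such data exist. *)

theory Defs
  imports Complex_Main
begin

(* Edge (v, v') \<in> edges carries weight  weight N v' v  (= omega_{v' v}).
   Output r (r < D) has bias  out_bias N r  (= lambda^{(r)}) and scalars
   out_weight N r w  (= lambda^{(r)}_w) for w \<in> outputs N.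
   Values of weight/bias/out_weight outside their meaningful domain are junk. *)
record 'v gfnn =
  nodes      :: "'v set"
  edges      :: "('v \<times> 'v) set"
  inputs     :: "'v set"
  outputs    :: "'v set"
  weight     :: "'v \<Rightarrow> 'v \<Rightarrow> real"
  bias       :: "'v \<Rightarrow> real"
  out_bias   :: "nat \<Rightarrow> real"
  out_weight :: "nat \<Rightarrow> 'v \<Rightarrow> real"

definition nonlinearity :: "(real \<Rightarrow> real) \<Rightarrow> bool" where
  "nonlinearity \<rho> \<longleftrightarrow> continuous_on UNIV \<rho> \<and> \<not> (\<exists>a b. \<forall>t. \<rho> t = a * t + b)"

definition par :: "'v gfnn \<Rightarrow> 'v \<Rightarrow> 'v set" where
  "par N v = {u. (u, v) \<in> edges N}"

definition anc :: "'v gfnn \<Rightarrow> 'v set \<Rightarrow> 'v set" where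
  "anc N S = {v. \<exists>s\<in>S. (v, s) \<in> (edges N)\<^sup>*}"

definition is_gfnn :: "'v gfnn \<Rightarrow> bool" where
  "is_gfnn N \<longleftrightarrow>
     finite (nodes N) \<and>
     edges N \<subseteq> nodes N \<times> nodes N \<and>
     (\<forall>v. (v, v) \<notin> edges N) \<and>
     acyclic (edges N) \<and>
     inputs N = {v \<in> nodes N. par N v = {}} \<and>
     outputs N \<subseteq> nodes N - inputs N \<and>
     (\<forall>(v, u) \<in> edges N. weight N u v \<noteq> 0)"

definition non_degenerate :: "nat \<Rightarrow> 'v gfnn \<Rightarrow> bool" where
  "non_degenerate D N \<longleftrightarrow>
     is_gfnn N \<and>
     nodes N - inputs N \<subseteq> anc N (outputs N) \<and>
     (\<forall>w \<in> outputs N. \<exists>r<D. out_weight N r w \<noteq> 0)"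

(* affine symmetry (zeta, {(alpha_s, beta_s, gamma_s)}_{s \<in> I}) of rho;
   linear dependence is of the indexed family {rho(beta_s . + gamma_s)}_{s\<in>I'} together with 1 *)
definition affine_symmetry ::
  "(real \<Rightarrow> real) \<Rightarrow> real \<Rightarrow> 'i set \<Rightarrow> ('i \<Rightarrow> real) \<Rightarrow> ('i \<Rightarrow> real) \<Rightarrow> ('i \<Rightarrow> real) \<Rightarrow> bool" where
  "affine_symmetry \<rho> \<zeta> I \<alpha> \<beta> \<gamma> \<longleftrightarrow>
     finite I \<and> I \<noteq> {} \<and>
     (\<forall>t. (\<Sum>s\<in>I. \<alpha> s * \<rho> (\<beta> s * t + \<gamma> s)) = \<zeta>) \<and>
     \<not> (\<exists>I' \<subset> I. \<exists>c c0. (c0 \<noteq> 0 \<or> (\<exists>s\<in>I'. c s \<noteq> 0)) \<and>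
           (\<forall>t. (\<Sum>s\<in>I'. c s * \<rho> (\<beta> s * t + \<gamma> s)) + c0 = 0))"

definition irreducible :: "(real \<Rightarrow> real) \<Rightarrow> 'v gfnn \<Rightarrow> bool" where
  "irreducible \<rho> N \<longleftrightarrow>
     \<not> (\<exists>U P \<kappa> \<beta> \<zeta> \<alpha>.
          U \<noteq> {} \<and> U \<subseteq> nodes N - inputs N \<and>
          (\<forall>u\<in>U. par N u = P) \<and>
          (\<forall>v\<in>P. \<kappa> v \<noteq> 0) \<and> (\<forall>u\<in>U. \<beta> u \<noteq> 0) \<and>
          (\<forall>u\<in>U. \<forall>v\<in>P. weight N u v = \<beta> u * \<kappa> v) \<and>
          (\<forall>u\<in>U. \<alpha> u \<noteq> 0) \<and>
          affine_symmetry \<rho> \<zeta> U \<alpha> \<beta> (bias N))"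

definition childs :: "'v gfnn \<Rightarrow> 'v set \<Rightarrow> 'v set" where
  "childs N A = {w. par N w \<inter> A \<noteq> {}}"

(* The network produced by the modification with given data.  The parameters
   (alpha'_p, beta'_p, gamma'_p) of the new node u'_p \<in> C are  alpha u'_p, beta u'_p, gamma u'_p. *)
definition modify ::
  "nat \<Rightarrow> 'v gfnn \<Rightarrow> 'v set \<Rightarrow> 'v set \<Rightarrow> 'v set \<Rightarrow> 'v set \<Rightarrow> real \<Rightarrow>
   ('v \<Rightarrow> real) \<Rightarrow> ('v \<Rightarrow> real) \<Rightarrow> ('v \<Rightarrow> real) \<Rightarrow> ('v \<Rightarrow> real) \<Rightarrow> ('v \<Rightarrow> real) \<Rightarrow> (nat \<Rightarrow> real)
   \<Rightarrow> 'v gfnn" where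
  "modify D N A B C P \<zeta> \<alpha> \<beta> \<gamma> \<kappa> \<nu> \<mu> =
    (let W = childs N A;
         V' = (nodes N - A) \<union> C;
         E' = {(x, y). ((x, y) \<in> edges N \<and> x \<notin> A \<and> y \<notin> A \<and> \<not> (x \<in> B \<and> y \<in> W))
                     \<or> (x \<in> P \<and> y \<in> C) \<or> (x \<in> C \<and> y \<in> W)
                     \<or> (x \<in> B \<and> y \<in> W \<and> ((x, y) \<in> edges N \<longrightarrow> weight N y x - \<alpha> x * \<nu> y \<noteq> 0))};
         wt' = (\<lambda>y x. if x \<in> C \<and> y \<in> W then - \<alpha> x * \<nu> y
                      else if y \<in> C then \<beta> y * \<kappa> x
                      else if x \<in> B \<and> y \<in> W then
                        (if (x, y) \<in> edges N then weight N y x else 0) - \<alpha> x * \<nu> y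
                      else weight N y x);
         th' = (\<lambda>w. if w \<in> W then bias N w + \<zeta> * \<nu> w
                    else if w \<in> C then \<gamma> w else bias N w);
         outA = (A \<subseteq> outputs N);
         lb' = (\<lambda>r. if outA then out_bias N r + \<zeta> * \<mu> r else out_bias N r);
         lw' = (\<lambda>r u. if outA then
                        (if u \<in> C then - \<alpha> u * \<mu> r
                         else if u \<in> B then (if u \<in> outputs N then out_weight N r u else 0) - \<alpha> u * \<mu> r
                         else out_weight N r u)
                      else out_weight N r u);
         O' = (if outA then (outputs N - (A \<union> B)) \<union> C \<union> {u \<in> B. \<exists>r<D. lw' r u \<noteq> 0}
               else outputs N)
     in \<lparr> nodes = V', edges = E', inputs = {v \<in> V'. \<forall>u. (u, v) \<notin> E'},
          outputs = O', weight = wt', bias = th', out_bias = lb', out_weight = lw' \<rparr>)"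

definition is_modification ::
  "(real \<Rightarrow> real) \<Rightarrow> nat \<Rightarrow> 'v gfnn \<Rightarrow> 'v set \<Rightarrow> 'v set \<Rightarrow> 'v set \<Rightarrow> 'v gfnn \<Rightarrow> bool" where
  "is_modification \<rho> D N A B C N' \<longleftrightarrow>
     irreducible \<rho> N \<and>
     A \<subseteq> nodes N - inputs N \<and> B \<subseteq> nodes N - inputs N \<and> A \<inter> B = {} \<and> A \<noteq> {} \<and>
     finite C \<and> C \<noteq> {} \<and> C \<inter> nodes N = {} \<and>
     (\<exists>P \<zeta> \<alpha> \<beta> \<gamma> \<kappa> \<nu> \<mu>.
        (\<forall>u \<in> A \<union> B. par N u = P) \<and>
        \<comment> \<open>(i)\<close>
        (\<forall>u \<in> A \<union> B. \<gamma> u = bias N u) \<and>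
        affine_symmetry \<rho> \<zeta> (A \<union> B \<union> C) \<alpha> \<beta> \<gamma> \<and>
        \<comment> \<open>(ii)\<close>
        (\<forall>v \<in> P. \<kappa> v \<noteq> 0) \<and>
        (\<forall>u \<in> A \<union> B. \<forall>v \<in> P. weight N u v = \<beta> u * \<kappa> v) \<and>
        \<comment> \<open>(iii)\<close>
        (\<forall>w \<in> childs N A. A \<subseteq> par N w \<and> \<nu> w \<noteq> 0 \<and> (\<forall>u \<in> A. weight N w u = \<nu> w * \<alpha> u)) \<and>
        \<comment> \<open>(iv)\<close>
        (A \<inter> outputs N = {} \<or>
         (A \<subseteq> outputs N \<and> (\<forall>r<D. \<forall>u \<in> A. out_weight N r u = \<mu> r * \<alpha> u))) \<and>
        N' = modify D N A B C P \<zeta> \<alpha> \<beta> \<gamma> \<kappa> \<nu> \<mu>)"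

definition admits_modification ::
  "(real \<Rightarrow> real) \<Rightarrow> nat \<Rightarrow> 'v gfnn \<Rightarrow> 'v set \<Rightarrow> 'v set \<Rightarrow> 'v set \<Rightarrow> bool" where
  "admits_modification \<rho> D N A B C \<longleftrightarrow> (\<exists>N'. is_modification \<rho> D N A B C N')"

end

theory Submission
  imports Defs
begin

definition hr :: "('v \<times> 'v) set \<Rightarrow> 'v \<Rightarrow> nat" where
  "hr E v = card {z. (z, v) \<in> E\<^sup>+}"

lemma hr_less:
  assumes "finite V" "E \<subseteq> V \<times> V" "acyclic E" "(x, y) \<in> E"
  shows "hr E x < hr E y"
proof -
  have fin: "finite {z. (z, y) \<in> E\<^sup>+}"
  proof (rule finite_subset[OF _ assms(1)])
    have "E\<^sup>+ \<subseteq> V \<times> V" using assms(2) by (rule trancl_subset_Sigma)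
    then show "{z. (z, y) \<in> E\<^sup>+} \<subseteq> V" by blast
  qed
  have "{z. (z, x) \<in> E\<^sup>+} \<subset> {z. (z, y) \<in> E\<^sup>+}"
  proof
    show "{z. (z, x) \<in> E\<^sup>+} \<subseteq> {z. (z, y) \<in> E\<^sup>+}" using assms(4) by (auto intro: trancl_into_trancl)
    have "(x, y) \<in> E\<^sup>+" using assms(4) by blast
    moreover have "(x, x) \<notin> E\<^sup>+" using assms(3) by (simp add: acyclic_def)
    ultimately show "{z. (z, x) \<in> E\<^sup>+} \<noteq> {z. (z, y) \<in> E\<^sup>+}" by blast
  qed
  then show ?thesis unfolding hr_def using fin by (rule psubset_card_mono[rotated])
qed

lemma hr_par:
  assumes "{x. (x, u) \<in> E} = {x. (x, v) \<in> E}"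
  shows "hr E u = hr E v"
proof -
  have "\<And>w. {z. (z, w) \<in> E\<^sup>+} = {z. \<exists>p. (p, w) \<in> E \<and> (z, p) \<in> E\<^sup>*}"
    by (auto dest: tranclD2 intro: rtrancl_into_trancl1)
  moreover have "\<And>p. (p, u) \<in> E \<longleftrightarrow> (p, v) \<in> E" using assms by blast
  ultimately show ?thesis unfolding hr_def by simp
qed

lemma rank_acyclic:
  fixes f :: "'a \<Rightarrow> nat"
  assumes "\<And>x y. (x, y) \<in> R \<Longrightarrow> f x < f y"
  shows "acyclic R"
proof -
  have "(x, y) \<in> R\<^sup>+ \<Longrightarrow> f x < f y" for x y
    by (induct rule: trancl_induct) (auto dest: assms)
  then show ?thesis unfolding acyclic_def by blast
qed


lemma mod_nondeg:
  fixes N :: "'v gfnn"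
  assumes nd: "non_degenerate D N"
    and AV: "A \<subseteq> nodes N - inputs N" and BV: "B \<subseteq> nodes N - inputs N"
    and ABd: "A \<inter> B = {}" and Ane: "A \<noteq> {}"
    and Cf: "finite C" and Cne: "C \<noteq> {}" and CV: "C \<inter> nodes N = {}"
    and parP: "\<forall>u\<in>A\<union>B. par N u = P"
    and nzC: "\<forall>c\<in>C. \<alpha> c \<noteq> 0 \<and> \<beta> c \<noteq> 0"
    and nzB: "\<forall>u\<in>B. \<alpha> u \<noteq> 0"
    and nzA: "\<forall>u\<in>A. \<alpha> u \<noteq> 0"
    and kap: "\<forall>v\<in>P. \<kappa> v \<noteq> 0"
    and iii: "\<forall>w\<in>childs N A. A \<subseteq> par N w \<and> \<nu> w \<noteq> 0 \<and> (\<forall>u\<in>A. weight N w u = \<nu> w * \<alpha> u)"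
    and iv: "A \<inter> outputs N = {} \<or> (A \<subseteq> outputs N \<and> (\<forall>r<D. \<forall>u\<in>A. out_weight N r u = \<mu> r * \<alpha> u))"
    and live: "\<forall>u\<in>B. (\<forall>y. (u, y) \<in> edges N \<longrightarrow> y \<in> childs N A) \<and>
                 (\<forall>w\<in>childs N A. (u, w) \<in> edges N \<and> weight N w u = \<nu> w * \<alpha> u) \<longrightarrow>
                 (if A \<subseteq> outputs N then \<not> (u \<in> outputs N \<and> (\<forall>r<D. out_weight N r u = \<mu> r * \<alpha> u))
                  else u \<in> outputs N)"
  shows "non_degenerate D (modify D N A B C P \<zeta> \<alpha> \<beta> \<gamma> \<kappa> \<nu> \<mu>)"
proof -
  define W where "W = childs N A"
  define N' where "N' = modify D N A B C P \<zeta> \<alpha> \<beta> \<gamma> \<kappa> \<nu> \<mu>"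
  define E where "E = edges N"
  define V where "V = nodes N"
  have G: "is_gfnn N" using nd by (simp add: non_degenerate_def)
  have finV: "finite V" and EV: "E \<subseteq> V \<times> V" and noloop: "\<And>v. (v, v) \<notin> E" and acy: "acyclic E"
    and inpN: "inputs N = {v \<in> V. par N v = {}}" and outN: "outputs N \<subseteq> V - inputs N"
    and wnz: "\<And>v u. (v, u) \<in> E \<Longrightarrow> weight N u v \<noteq> 0"
    using G unfolding is_gfnn_def E_def V_def by auto
  have parE: "\<And>u v. u \<in> par N v \<longleftrightarrow> (u, v) \<in> E" by (simp add: par_def E_def)
  have ancN: "V - inputs N \<subseteq> anc N (outputs N)" and outnz: "\<forall>w\<in>outputs N. \<exists>r<D. out_weight N r w \<noteq> 0"
    using nd unfolding non_degenerate_def V_def by auto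
  obtain a0 where a0: "a0 \<in> A" using Ane by blast
  have a0V: "a0 \<in> V" "a0 \<notin> inputs N" using a0 AV V_def by auto
  have para0: "par N a0 = P" using a0 parP by auto
  have Pne: "P \<noteq> {}" using a0V inpN para0 by auto
  have PV: "P \<subseteq> V" using para0 EV parE by auto
  have PAB: "P \<inter> (A \<union> B) = {}"
  proof (rule ccontr)
    assume "P \<inter> (A \<union> B) \<noteq> {}"
    then obtain p where "p \<in> P" "p \<in> A \<union> B" by blast
    then have "p \<in> par N p" using parP by auto
    then show False using noloop parE by blast
  qed
  have Wmem: "\<And>w. w \<in> W \<longleftrightarrow> (\<exists>a\<in>A. (a, w) \<in> E)" unfolding W_def childs_def using parE by blast
  have WV: "W \<subseteq> V" using Wmem EV by blast
  have WAB: "W \<inter> (A \<union> B) = {}"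
  proof (rule ccontr)
    assume "W \<inter> (A \<union> B) \<noteq> {}"
    then obtain w where w: "w \<in> W" "w \<in> A \<union> B" by blast
    then have "A \<subseteq> par N w" using iii W_def by auto
    then have "a0 \<in> P" using w parP a0 by auto
    then show False using PAB a0 by blast
  qed
  have iii': "\<And>w. w \<in> W \<Longrightarrow> (\<forall>a\<in>A. (a, w) \<in> E) \<and> \<nu> w \<noteq> 0" using iii W_def parE by blast
  have AVs: "A \<subseteq> V" "B \<subseteq> V" using AV BV V_def by auto
  have CW: "C \<inter> W = {}" "C \<inter> P = {}" "C \<inter> A = {}" "C \<inter> B = {}" using CV WV PV AVs V_def by auto
  have mu_nz: "A \<subseteq> outputs N \<Longrightarrow> \<exists>r<D. \<mu> r \<noteq> 0"
  proof -
    assume "A \<subseteq> outputs N"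
    then have "a0 \<in> outputs N" using a0 by blast
    then obtain r where "r < D" "out_weight N r a0 \<noteq> 0" using outnz by blast
    moreover have "A \<inter> outputs N \<noteq> {}" using a0 \<open>a0 \<in> outputs N\<close> by blast
    ultimately show ?thesis using iv a0 by fastforce
  qed
  have Wempty: "W = {} \<Longrightarrow> A \<subseteq> outputs N"
  proof -
    assume W0: "W = {}"
    have "a0 \<in> anc N (outputs N)" using ancN a0V by blast
    then obtain s where s: "s \<in> outputs N" "(a0, s) \<in> E\<^sup>*" unfolding anc_def E_def by blast
    have "a0 = s"
    proof (rule ccontr)
      assume "a0 \<noteq> s"
      then obtain y where "(a0, y) \<in> E" using s(2) by (metis converse_rtranclE)
      then have "y \<in> W" using Wmem a0 by blast
      then show False using W0 by blast
    qed
    then have "A \<inter> outputs N \<noteq> {}" using a0 s by blast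
    then show ?thesis using iv by blast
  qed
  have nodesN': "nodes N' = (V - A) \<union> C" unfolding N'_def modify_def Let_def V_def by simp
  have edgesN': "\<And>x y. (x, y) \<in> edges N' \<longleftrightarrow>
      ((x, y) \<in> E \<and> x \<notin> A \<and> y \<notin> A \<and> \<not> (x \<in> B \<and> y \<in> W))
      \<or> (x \<in> P \<and> y \<in> C) \<or> (x \<in> C \<and> y \<in> W)
      \<or> (x \<in> B \<and> y \<in> W \<and> ((x, y) \<in> E \<longrightarrow> weight N y x - \<alpha> x * \<nu> y \<noteq> 0))"
    unfolding N'_def modify_def Let_def E_def W_def by simp
  have inputsN': "inputs N' = {v \<in> nodes N'. \<forall>u. (u, v) \<notin> edges N'}"
    unfolding N'_def modify_def Let_def by simp
  have weightN': "\<And>y x. weight N' y x = (if x \<in> C \<and> y \<in> W then - \<alpha> x * \<nu> y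
                      else if y \<in> C then \<beta> y * \<kappa> x
                      else if x \<in> B \<and> y \<in> W then
                        (if (x, y) \<in> E then weight N y x else 0) - \<alpha> x * \<nu> y
                      else weight N y x)"
    unfolding N'_def modify_def Let_def E_def W_def by simp
  have owN': "\<And>r u. out_weight N' r u = (if A \<subseteq> outputs N then
                        (if u \<in> C then - \<alpha> u * \<mu> r
                         else if u \<in> B then (if u \<in> outputs N then out_weight N r u else 0) - \<alpha> u * \<mu> r
                         else out_weight N r u)
                      else out_weight N r u)"
    unfolding N'_def modify_def Let_def by simp
  have outputsN': "outputs N' = (if A \<subseteq> outputs N then (outputs N - (A \<union> B)) \<union> C \<union> {u \<in> B. \<exists>r<D. out_weight N' r u \<noteq> 0}
               else outputs N)"
    unfolding N'_def modify_def Let_def by simp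
  have ni: "\<And>y. y \<in> V - A \<Longrightarrow> y \<notin> inputs N \<Longrightarrow> \<exists>x. (x, y) \<in> edges N'"
  proof -
    fix y assume y: "y \<in> V - A" "y \<notin> inputs N"
    then obtain x where x: "(x, y) \<in> E" using inpN parE by blast
    show "\<exists>x. (x, y) \<in> edges N'"
    proof (cases "y \<in> W")
      case True
      then show ?thesis using Cne edgesN' by blast
    next
      case False
      then have "x \<notin> A" using Wmem x by blast
      then show ?thesis using x y False edgesN' by blast
    qed
  qed
  have inp_back: "\<And>y x. y \<in> V - A \<Longrightarrow> (x, y) \<in> edges N' \<Longrightarrow> y \<notin> inputs N"
  proof -
    fix y x assume y: "y \<in> V - A" and e: "(x, y) \<in> edges N'"
    have "\<exists>z. (z, y) \<in> E"
      using e unfolding edgesN' using y CW Wmem CV V_def by blast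
    then show "y \<notin> inputs N" using inpN parE by blast
  qed
  have Cni: "\<And>c. c \<in> C \<Longrightarrow> \<exists>x. (x, c) \<in> edges N'" using Pne edgesN' by blast
  have hB: "\<And>u. u \<in> A \<union> B \<Longrightarrow> hr E u = hr E a0"
  proof -
    fix u assume "u \<in> A \<union> B"
    then have "par N u = par N a0" using parP a0 by auto
    then show "hr E u = hr E a0" by (intro hr_par) (simp add: par_def E_def)
  qed
  define h' where "h' x = (if x \<in> C then hr E a0 else hr E x)" for x
  have rank: "\<And>x y. (x, y) \<in> edges N' \<Longrightarrow> h' x < h' y"
  proof -
    fix x y assume e: "(x, y) \<in> edges N'"
    have hl: "\<And>x y. (x, y) \<in> E \<Longrightarrow> hr E x < hr E y" using hr_less[OF finV EV acy] .
    from e[unfolded edgesN'] show "h' x < h' y"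
    proof (elim disjE conjE)
      assume "(x, y) \<in> E" "x \<notin> A" "y \<notin> A" "\<not> (x \<in> B \<and> y \<in> W)"
      moreover have "x \<notin> C" "y \<notin> C" using calculation(1) EV CV V_def by auto
      ultimately show ?thesis using hl h'_def by simp
    next
      assume "x \<in> P" "y \<in> C"
      then have "(x, a0) \<in> E" "x \<notin> C" using para0 parE CW by auto
      then show ?thesis using hl h'_def \<open>y \<in> C\<close> by simp
    next
      assume "x \<in> C" "y \<in> W"
      then have "(a0, y) \<in> E" "y \<notin> C" using iii' a0 CW by auto
      then show ?thesis using hl h'_def \<open>x \<in> C\<close> by simp
    next
      assume "x \<in> B" "y \<in> W"
      then have "(a0, y) \<in> E" "y \<notin> C" "x \<notin> C" "hr E x = hr E a0"
        using iii'[of y] a0 CW hB[of x] by blast+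
      then show ?thesis using hl h'_def by simp
    qed
  qed
  have acy': "acyclic (edges N')" by (rule rank_acyclic[of _ h']) (rule rank)
  have E'sub: "edges N' \<subseteq> nodes N' \<times> nodes N'"
  proof
    fix e assume "e \<in> edges N'"
    then obtain x y where e: "e = (x, y)" "(x, y) \<in> edges N'" by (cases e) auto
    have "x \<in> nodes N' \<and> y \<in> nodes N'"
      using e(2)[unfolded edgesN']
    proof (elim disjE conjE)
      assume "(x, y) \<in> E" "x \<notin> A" "y \<notin> A" "\<not> (x \<in> B \<and> y \<in> W)"
      then show ?thesis using EV nodesN' by blast
    next
      assume "x \<in> P" "y \<in> C" then show ?thesis using PV PAB nodesN' by blast
    next
      assume "x \<in> C" "y \<in> W" then show ?thesis using WV WAB nodesN' by blast
    next
      assume "x \<in> B" "y \<in> W" "(x, y) \<in> E \<longrightarrow> weight N y x - \<alpha> x * \<nu> y \<noteq> 0"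
      then show ?thesis using AVs ABd WV WAB nodesN' by blast
    qed
    then show "e \<in> nodes N' \<times> nodes N'" using e by simp
  qed
  have inputs_eq: "inputs N' = inputs N"
  proof
    show "inputs N' \<subseteq> inputs N"
    proof
      fix v assume v: "v \<in> inputs N'"
      then have v1: "v \<in> nodes N'" "\<forall>u. (u, v) \<notin> edges N'" using inputsN' by auto
      then have "v \<notin> C" using Cni by blast
      then have "v \<in> V - A" using v1 nodesN' by auto
      then show "v \<in> inputs N" using ni v1 by blast
    qed
  next
    show "inputs N \<subseteq> inputs N'"
    proof
      fix v assume v: "v \<in> inputs N"
      then have "v \<in> V - A" using inpN AV V_def by auto
      then show "v \<in> inputs N'" using inp_back v inputsN' nodesN' by blast
    qed
  qed
  have ni': "\<And>v. v \<in> nodes N' - inputs N' \<longleftrightarrow> v \<in> C \<or> (v \<in> V - A \<and> v \<notin> inputs N)"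
    using inputs_eq nodesN' CV V_def inpN by auto
  have outA_nz: "\<And>u r. A \<subseteq> outputs N \<Longrightarrow> u \<in> C \<Longrightarrow> \<mu> r \<noteq> 0 \<Longrightarrow> out_weight N' r u \<noteq> 0"
    using owN' nzC by simp
  have outsub: "outputs N' \<subseteq> nodes N' - inputs N'"
  proof
    fix v assume v: "v \<in> outputs N'"
    have "v \<in> C \<or> (v \<in> V - A \<and> v \<notin> inputs N)"
    proof (cases "A \<subseteq> outputs N")
      case True
      then show ?thesis using v outputsN' outN BV ABd V_def by auto
    next
      case False
      then have "A \<inter> outputs N = {}" using iv by blast
      then show ?thesis using v outputsN' False outN V_def by auto
    qed
    then show "v \<in> nodes N' - inputs N'" using ni' by blast
  qed
  have wnz': "\<And>x y. (x, y) \<in> edges N' \<Longrightarrow> weight N' y x \<noteq> 0"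
  proof -
    fix x y assume e: "(x, y) \<in> edges N'"
    from e[unfolded edgesN'] show "weight N' y x \<noteq> 0"
    proof (elim disjE conjE)
      assume a: "(x, y) \<in> E" "x \<notin> A" "y \<notin> A" "\<not> (x \<in> B \<and> y \<in> W)"
      moreover have "x \<notin> C" "y \<notin> C" using a(1) EV CV V_def by auto
      ultimately show ?thesis using weightN'[of y x] wnz[of x y] by auto
    next
      assume "x \<in> P" "y \<in> C"
      moreover have "x \<notin> C" using calculation CW by blast
      ultimately show ?thesis using weightN' nzC kap by simp
    next
      assume "x \<in> C" "y \<in> W"
      then show ?thesis using weightN' nzC iii' by simp
    next
      assume a: "x \<in> B" "y \<in> W" "(x, y) \<in> E \<longrightarrow> weight N y x - \<alpha> x * \<nu> y \<noteq> 0"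
      moreover have "x \<notin> C" "y \<notin> C" using a CW by blast+
      ultimately show ?thesis using weightN' nzB iii' by simp
    qed
  qed
  have finE': "finite (edges N')"
    by (rule finite_subset[OF E'sub]) (simp add: nodesN' finV Cf)
  have gfnn': "is_gfnn N'"
    unfolding is_gfnn_def
  proof (intro conjI)
    show "finite (nodes N')" by (simp add: nodesN' finV Cf)
    show "edges N' \<subseteq> nodes N' \<times> nodes N'" by (rule E'sub)
    show "\<forall>v. (v, v) \<notin> edges N'" using acy' unfolding acyclic_def by blast
    show "acyclic (edges N')" by (rule acy')
    show "inputs N' = {v \<in> nodes N'. par N' v = {}}" using inputsN' by (auto simp: par_def)
    show "outputs N' \<subseteq> nodes N' - inputs N'" by (rule outsub)
    show "\<forall>(v, u)\<in>edges N'. weight N' u v \<noteq> 0" using wnz' by blast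
  qed
  have wf: "wf ((edges N')\<inverse>)" by (rule finite_acyclic_wf_converse[OF finE' acy'])
  have tgt: "\<And>x y. (x, y) \<in> edges N' \<Longrightarrow> y \<in> nodes N' - inputs N'"
    using E'sub inputsN' by blast
  have reach: "x \<in> nodes N' - inputs N' \<longrightarrow> (\<exists>s\<in>outputs N'. (x, s) \<in> (edges N')\<^sup>*)" for x
  proof (induct x rule: wf_induct[OF wf])
    case (1 x)
    have step: "\<exists>s\<in>outputs N'. (x, s) \<in> (edges N')\<^sup>*" if xy: "(x, y) \<in> edges N'" for y
    proof -
      have "(y, x) \<in> (edges N')\<inverse>" using xy by simp
      then obtain s where "s \<in> outputs N'" "(y, s) \<in> (edges N')\<^sup>*" using 1 tgt[OF xy] by blast
      then show ?thesis using xy by (meson converse_rtrancl_into_rtrancl)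
    qed
    show ?case
    proof
      assume x: "x \<in> nodes N' - inputs N'"
      show "\<exists>s\<in>outputs N'. (x, s) \<in> (edges N')\<^sup>*"
      proof (cases "x \<in> outputs N'")
        case True then show ?thesis by blast
      next
        case notout: False
        have "x \<in> C \<or> (x \<in> V - A \<and> x \<notin> inputs N)" using x ni' by blast
        then show ?thesis
        proof
          assume xC: "x \<in> C"
          show ?thesis
          proof (cases "W = {}")
            case True
            then have "A \<subseteq> outputs N" by (rule Wempty)
            then have "x \<in> outputs N'" using xC outputsN' by simp
            then show ?thesis using notout by blast
          next
            case False
            then obtain w where "w \<in> W" by blast
            then have "(x, w) \<in> edges N'" using xC edgesN' by blast
            then show ?thesis by (rule step)
          qed
        next
          assume xV: "x \<in> V - A \<and> x \<notin> inputs N"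
          show ?thesis
          proof (cases "x \<in> B")
            case xB: True
            show ?thesis
            proof (cases "\<exists>y. (x, y) \<in> E \<and> y \<notin> W")
              case True
              then obtain y where y: "(x, y) \<in> E" "y \<notin> W" by blast
              have "y \<notin> A"
              proof
                assume "y \<in> A"
                then have "x \<in> P" using parP parE y by blast
                then show False using PAB xB by blast
              qed
              then have "(x, y) \<in> edges N'" using y xV edgesN' by blast
              then show ?thesis by (rule step)
            next
              case noout: False
              show ?thesis
              proof (cases "\<exists>w\<in>W. \<not> ((x, w) \<in> E \<and> weight N w x = \<nu> w * \<alpha> x)")
                case True
                then obtain w where w: "w \<in> W" "\<not> ((x, w) \<in> E \<and> weight N w x = \<nu> w * \<alpha> x)" by blast
                then have "(x, w) \<in> E \<longrightarrow> weight N w x - \<alpha> x * \<nu> w \<noteq> 0" by (auto simp: mult.commute)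
                then have "(x, w) \<in> edges N'" using w xB edgesN' by blast
                then show ?thesis by (rule step)
              next
                case False
                then have L: "if A \<subseteq> outputs N then \<not> (x \<in> outputs N \<and> (\<forall>r<D. out_weight N r x = \<mu> r * \<alpha> x))
                  else x \<in> outputs N"
                  using live xB noout W_def E_def by blast
                have xnC: "x \<notin> C" using xB CW by blast
                have "x \<in> outputs N'"
                proof (cases "A \<subseteq> outputs N")
                  case outA: True
                  have "\<exists>r<D. out_weight N' r x \<noteq> 0"
                  proof (cases "x \<in> outputs N")
                    case True
                    then obtain r where "r < D" "out_weight N r x \<noteq> \<mu> r * \<alpha> x" using L outA by auto
                    then show ?thesis using owN' outA xnC xB True by (auto simp: mult.commute)
                  next
                    case False
                    obtain r where "r < D" "\<mu> r \<noteq> 0" using mu_nz outA by blast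
                    then show ?thesis using owN' outA xnC xB False nzB by auto
                  qed
                  then show ?thesis using outputsN' outA xB by simp
                next
                  case False
                  then show ?thesis using L outputsN' by simp
                qed
                then show ?thesis using notout by blast
              qed
            qed
          next
            case xnB: False
            have "x \<in> anc N (outputs N)" using ancN xV by blast
            then obtain s where s: "s \<in> outputs N" "(x, s) \<in> E\<^sup>*" unfolding anc_def E_def by blast
            show ?thesis
            proof (cases "x = s")
              case True
              then have "x \<in> outputs N'" using s xV xnB outputsN' by auto
              then show ?thesis using notout by blast
            next
              case False
              then obtain y where y: "(x, y) \<in> E" using s(2) by (metis converse_rtranclE)
              show ?thesis
              proof (cases "y \<in> A")
                case True
                then have "x \<in> P" using parP parE y by blast
                then obtain c where "c \<in> C" "(x, c) \<in> edges N'" using Cne edgesN' by blast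
                then show ?thesis using step by blast
              next
                case False
                then have "(x, y) \<in> edges N'" using y xV xnB edgesN' by blast
                then show ?thesis by (rule step)
              qed
            qed
          qed
        qed
      qed
    qed
  qed
  have ancN': "nodes N' - inputs N' \<subseteq> anc N' (outputs N')"
    using reach unfolding anc_def by blast
  have onz': "\<forall>w\<in>outputs N'. \<exists>r<D. out_weight N' r w \<noteq> 0"
  proof
    fix w assume w: "w \<in> outputs N'"
    show "\<exists>r<D. out_weight N' r w \<noteq> 0"
    proof (cases "A \<subseteq> outputs N")
      case outA: True
      have "w \<in> C \<or> (w \<in> outputs N - (A \<union> B)) \<or> (w \<in> B \<and> (\<exists>r<D. out_weight N' r w \<noteq> 0))"
        using w outputsN' outA by auto
      then show ?thesis
      proof (elim disjE)
        assume "w \<in> C"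
        moreover obtain r where "r < D" "\<mu> r \<noteq> 0" using mu_nz outA by blast
        ultimately show ?thesis using outA_nz outA by blast
      next
        assume a: "w \<in> outputs N - (A \<union> B)"
        then have "w \<notin> C" using outN CV V_def by blast
        then show ?thesis using a owN' outnz by auto
      qed blast
    next
      case False
      then show ?thesis using w outputsN' owN' outnz by simp
    qed
  qed
  show ?thesis unfolding N'_def[symmetric] non_degenerate_def using gfnn' ancN' onz' by blast
qed


theorem lemma4:
  fixes \<rho> :: "real \<Rightarrow> real" and D :: nat and N :: "'v gfnn" and A B C :: "'v set"
  assumes "non_degenerate D N"
    and "nonlinearity \<rho>"
    and "admits_modification \<rho> D N A B C"
  shows "\<exists>Bs \<subseteq> B. \<exists>N'. is_modification \<rho> D N (A \<union> Bs) (B - Bs) C N' \<and> non_degenerate D N'"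
proof -
  note nd = assms(1)
  obtain N0 where "is_modification \<rho> D N A B C N0" using assms(3) unfolding admits_modification_def by blast
  then have irr: "irreducible \<rho> N"
    and AV: "A \<subseteq> nodes N - inputs N" and BV: "B \<subseteq> nodes N - inputs N"
    and ABd: "A \<inter> B = {}" and Ane: "A \<noteq> {}"
    and Cf: "finite C" and Cne: "C \<noteq> {}" and CV: "C \<inter> nodes N = {}"
    and ex: "\<exists>P \<zeta> \<alpha> \<beta> \<gamma> \<kappa> \<nu> \<mu>.
        (\<forall>u \<in> A \<union> B. par N u = P) \<and>
        (\<forall>u \<in> A \<union> B. \<gamma> u = bias N u) \<and>
        affine_symmetry \<rho> \<zeta> (A \<union> B \<union> C) \<alpha> \<beta> \<gamma> \<and>
        (\<forall>v \<in> P. \<kappa> v \<noteq> 0) \<and>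
        (\<forall>u \<in> A \<union> B. \<forall>v \<in> P. weight N u v = \<beta> u * \<kappa> v) \<and>
        (\<forall>w \<in> childs N A. A \<subseteq> par N w \<and> \<nu> w \<noteq> 0 \<and> (\<forall>u \<in> A. weight N w u = \<nu> w * \<alpha> u)) \<and>
        (A \<inter> outputs N = {} \<or>
         (A \<subseteq> outputs N \<and> (\<forall>r<D. \<forall>u \<in> A. out_weight N r u = \<mu> r * \<alpha> u))) \<and>
        N0 = modify D N A B C P \<zeta> \<alpha> \<beta> \<gamma> \<kappa> \<nu> \<mu>"
    unfolding is_modification_def by blast+
  then obtain P \<zeta> \<alpha> \<beta> \<gamma> \<kappa> \<nu> \<mu> where
        parP: "\<forall>u \<in> A \<union> B. par N u = P" and
        gam: "\<forall>u \<in> A \<union> B. \<gamma> u = bias N u" and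
        aff: "affine_symmetry \<rho> \<zeta> (A \<union> B \<union> C) \<alpha> \<beta> \<gamma>" and
        kap: "\<forall>v \<in> P. \<kappa> v \<noteq> 0" and
        wb: "\<forall>u \<in> A \<union> B. \<forall>v \<in> P. weight N u v = \<beta> u * \<kappa> v" and
        iii: "\<forall>w \<in> childs N A. A \<subseteq> par N w \<and> \<nu> w \<noteq> 0 \<and> (\<forall>u \<in> A. weight N w u = \<nu> w * \<alpha> u)" and
        iv: "A \<inter> outputs N = {} \<or>
         (A \<subseteq> outputs N \<and> (\<forall>r<D. \<forall>u \<in> A. out_weight N r u = \<mu> r * \<alpha> u))"
    by blast
  have G: "is_gfnn N" using nd by (simp add: non_degenerate_def)
  have wnz: "\<And>v u. (v, u) \<in> edges N \<Longrightarrow> weight N u v \<noteq> 0"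
    using G unfolding is_gfnn_def by auto
  have ancN: "nodes N - inputs N \<subseteq> anc N (outputs N)" and outnz: "\<forall>w\<in>outputs N. \<exists>r<D. out_weight N r w \<noteq> 0"
    using nd unfolding non_degenerate_def by auto
  obtain a0 where a0: "a0 \<in> A" using Ane by blast
  let ?I = "A \<union> B \<union> C"
  have affs: "finite ?I" "\<And>t. (\<Sum>s\<in>?I. \<alpha> s * \<rho> (\<beta> s * t + \<gamma> s)) = \<zeta>"
    "\<not> (\<exists>I' \<subset> ?I. \<exists>c c0. (c0 \<noteq> 0 \<or> (\<exists>s\<in>I'. c s \<noteq> 0)) \<and>
           (\<forall>t. (\<Sum>s\<in>I'. c s * \<rho> (\<beta> s * t + \<gamma> s)) + c0 = 0))"
    using aff unfolding affine_symmetry_def by auto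
  have a0C: "a0 \<notin> C" using a0 AV CV by blast
  have nzA: "\<forall>u\<in>A. \<alpha> u \<noteq> 0"
  proof (intro ballI notI)
    fix a assume a: "a \<in> A" and z: "\<alpha> a = 0"
    have W0: "childs N A = {}"
    proof (rule ccontr)
      assume "childs N A \<noteq> {}"
      then obtain w where w: "w \<in> childs N A" by blast
      then have "(a, w) \<in> edges N" "weight N w a = 0" using iii a z by (auto simp: par_def)
      then show False using wnz by blast
    qed
    have "a \<in> anc N (outputs N)" using ancN a AV by blast
    then obtain s where s: "s \<in> outputs N" "(a, s) \<in> (edges N)\<^sup>*" unfolding anc_def by blast
    have "a = s"
    proof (rule ccontr)
      assume "a \<noteq> s"
      then obtain y where "(a, y) \<in> edges N" using s(2) by (metis converse_rtranclE)
      then have "y \<in> childs N A" using a by (auto simp: childs_def par_def)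
      then show False using W0 by blast
    qed
    then have "A \<inter> outputs N \<noteq> {}" using a s by blast
    then have "\<forall>r<D. out_weight N r a = 0" using iv a z by auto
    then show False using outnz s \<open>a = s\<close> by blast
  qed
  have nzBC: "\<forall>s\<in>B \<union> C. \<alpha> s \<noteq> 0"
  proof (intro ballI notI)
    fix s assume s: "s \<in> B \<union> C" and z: "\<alpha> s = 0"
    let ?I' = "?I - {s}"
    have sub: "?I' \<subset> ?I" using s by blast
    have "a0 \<in> ?I'" using a0 s ABd a0C by blast
    moreover have "\<forall>t. (\<Sum>s\<in>?I'. \<alpha> s * \<rho> (\<beta> s * t + \<gamma> s)) + (- \<zeta>) = 0"
    proof
      fix t
      have "(\<Sum>s\<in>?I. \<alpha> s * \<rho> (\<beta> s * t + \<gamma> s)) = \<alpha> s * \<rho> (\<beta> s * t + \<gamma> s) + (\<Sum>s\<in>?I'. \<alpha> s * \<rho> (\<beta> s * t + \<gamma> s))"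
        using s affs(1) by (intro sum.remove) auto
      then show "(\<Sum>s\<in>?I'. \<alpha> s * \<rho> (\<beta> s * t + \<gamma> s)) + (- \<zeta>) = 0" using affs(2)[of t] z by simp
    qed
    ultimately show False using affs(3) sub nzA a0 by blast
  qed
  have nzbC: "\<forall>c\<in>C. \<beta> c \<noteq> 0"
  proof (intro ballI notI)
    fix c assume c: "c \<in> C" and z: "\<beta> c = 0"
    have sub: "{c} \<subset> ?I" using c a0 a0C by auto
    have "\<exists>I' \<subset> ?I. \<exists>cc c0. (c0 \<noteq> 0 \<or> (\<exists>s\<in>I'. cc s \<noteq> 0)) \<and>
           (\<forall>t. (\<Sum>s\<in>I'. cc s * \<rho> (\<beta> s * t + \<gamma> s)) + c0 = 0)"
      apply (rule exI[of _ "{c}"])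
      apply (rule conjI[OF sub])
      apply (rule exI[of _ "\<lambda>_. 1::real"], rule exI[of _ "- \<rho> (\<gamma> c)"])
      using z by simp
    then show False using affs(3) by blast
  qed
  define W where "W = childs N A"
  define Bs where "Bs = {u \<in> B. (\<forall>y. (u, y) \<in> edges N \<longrightarrow> y \<in> W) \<and>
       (\<forall>w\<in>W. (u, w) \<in> edges N \<and> weight N w u = \<nu> w * \<alpha> u) \<and>
       (if A \<subseteq> outputs N then u \<in> outputs N \<and> (\<forall>r<D. out_weight N r u = \<mu> r * \<alpha> u)
        else u \<notin> outputs N)}"
  have BsB: "Bs \<subseteq> B" unfolding Bs_def by blast
  have un: "(A \<union> Bs) \<union> (B - Bs) = A \<union> B" using BsB by blast
  have chA: "childs N (A \<union> Bs) = W"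
  proof
    show "childs N (A \<union> Bs) \<subseteq> W"
    proof
      fix w assume "w \<in> childs N (A \<union> Bs)"
      then obtain u where u: "u \<in> A \<union> Bs" "(u, w) \<in> edges N" by (auto simp: childs_def par_def)
      then show "w \<in> W"
      proof (cases "u \<in> A")
        case True then show ?thesis using u by (auto simp: W_def childs_def par_def)
      next
        case False then show ?thesis using u Bs_def by blast
      qed
    qed
    show "W \<subseteq> childs N (A \<union> Bs)" unfolding W_def childs_def by blast
  qed
  have outA_eq: "(A \<union> Bs \<subseteq> outputs N) = (A \<subseteq> outputs N)" unfolding Bs_def by auto
  have iii': "\<forall>w\<in>childs N (A \<union> Bs). A \<union> Bs \<subseteq> par N w \<and> \<nu> w \<noteq> 0 \<and> (\<forall>u\<in>A \<union> Bs. weight N w u = \<nu> w * \<alpha> u)"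
    unfolding chA using iii unfolding W_def Bs_def by (auto simp: par_def W_def)
  have iv': "(A \<union> Bs) \<inter> outputs N = {} \<or> (A \<union> Bs \<subseteq> outputs N \<and> (\<forall>r<D. \<forall>u\<in>A \<union> Bs. out_weight N r u = \<mu> r * \<alpha> u))"
  proof (cases "A \<subseteq> outputs N")
    case True
    then show ?thesis using iv Ane unfolding Bs_def by auto
  next
    case False
    then show ?thesis using iv unfolding Bs_def by auto
  qed
  have live: "\<forall>u\<in>B - Bs. (\<forall>y. (u, y) \<in> edges N \<longrightarrow> y \<in> childs N (A \<union> Bs)) \<and>
                 (\<forall>w\<in>childs N (A \<union> Bs). (u, w) \<in> edges N \<and> weight N w u = \<nu> w * \<alpha> u) \<longrightarrow>
                 (if A \<union> Bs \<subseteq> outputs N then \<not> (u \<in> outputs N \<and> (\<forall>r<D. out_weight N r u = \<mu> r * \<alpha> u))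
                  else u \<in> outputs N)"
    unfolding chA outA_eq unfolding Bs_def by auto
  define N' where "N' = modify D N (A \<union> Bs) (B - Bs) C P \<zeta> \<alpha> \<beta> \<gamma> \<kappa> \<nu> \<mu>"
  have ism: "is_modification \<rho> D N (A \<union> Bs) (B - Bs) C N'"
    unfolding is_modification_def
  proof (intro conjI)
    show "irreducible \<rho> N" by (rule irr)
    show "A \<union> Bs \<subseteq> nodes N - inputs N" using AV BV BsB by blast
    show "B - Bs \<subseteq> nodes N - inputs N" using BV by blast
    show "(A \<union> Bs) \<inter> (B - Bs) = {}" using ABd by blast
    show "A \<union> Bs \<noteq> {}" using Ane by blast
    show "finite C" "C \<noteq> {}" "C \<inter> nodes N = {}" using Cf Cne CV by auto
    show "\<exists>P \<zeta> \<alpha> \<beta> \<gamma> \<kappa> \<nu> \<mu>.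
        (\<forall>u \<in> A \<union> Bs \<union> (B - Bs). par N u = P) \<and>
        (\<forall>u \<in> A \<union> Bs \<union> (B - Bs). \<gamma> u = bias N u) \<and>
        affine_symmetry \<rho> \<zeta> (A \<union> Bs \<union> (B - Bs) \<union> C) \<alpha> \<beta> \<gamma> \<and>
        (\<forall>v \<in> P. \<kappa> v \<noteq> 0) \<and>
        (\<forall>u \<in> A \<union> Bs \<union> (B - Bs). \<forall>v \<in> P. weight N u v = \<beta> u * \<kappa> v) \<and>
        (\<forall>w \<in> childs N (A \<union> Bs). A \<union> Bs \<subseteq> par N w \<and> \<nu> w \<noteq> 0 \<and> (\<forall>u \<in> A \<union> Bs. weight N w u = \<nu> w * \<alpha> u)) \<and>
        ((A \<union> Bs) \<inter> outputs N = {} \<or>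
         (A \<union> Bs \<subseteq> outputs N \<and> (\<forall>r<D. \<forall>u \<in> A \<union> Bs. out_weight N r u = \<mu> r * \<alpha> u))) \<and>
        N' = modify D N (A \<union> Bs) (B - Bs) C P \<zeta> \<alpha> \<beta> \<gamma> \<kappa> \<nu> \<mu>"
      unfolding un using parP gam aff kap wb iii' iv' N'_def by blast
  qed
  have "non_degenerate D N'"
    unfolding N'_def
  proof (rule mod_nondeg[OF nd])
    show "A \<union> Bs \<subseteq> nodes N - inputs N" using AV BV BsB by blast
    show "B - Bs \<subseteq> nodes N - inputs N" using BV by blast
    show "(A \<union> Bs) \<inter> (B - Bs) = {}" using ABd by blast
    show "A \<union> Bs \<noteq> {}" using Ane by blast
    show "finite C" "C \<noteq> {}" "C \<inter> nodes N = {}" using Cf Cne CV by auto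
    show "\<forall>u\<in>A \<union> Bs \<union> (B - Bs). par N u = P" unfolding un by (rule parP)
    show "\<forall>c\<in>C. \<alpha> c \<noteq> 0 \<and> \<beta> c \<noteq> 0" using nzBC nzbC by blast
    show "\<forall>u\<in>B - Bs. \<alpha> u \<noteq> 0" using nzBC by blast
    show "\<forall>u\<in>A \<union> Bs. \<alpha> u \<noteq> 0" using nzBC nzA BsB by blast
    show "\<forall>v\<in>P. \<kappa> v \<noteq> 0" by (rule kap)
  qed (rule iii', rule iv', rule live)
  then show ?thesis using ism BsB by blast
qed

end
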